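(* Let $\{A_i\}_{i\in I}$ be a family of Banach lattice algebras, $1\le p\le\infty$, and let $\ell_p(A_i)$ be their $\ell_p$-sum with coordinatewise order and product. Then \[BP(\ell_p(A_i))=\prod_{i\in I}BP(A_i),\quad BP_l(\ell_p(A_i))=\prod_{i\in I}BP_l(A_i),\quad BP_r(\ell_p(A_i))=\prod_{i\in I}BP_r(A_i)\] (intersected with $\ell_p(A_i)$, i.e. an element $(p_i)\in\ell_p(A_i)$ lies in the left-hand set iff each $p_i$ lies in the corresponding set for $A_i$). If each $A_i$ has an identity, then $OI(\ell_\infty(A_i))=\prod_{i\in I}OI(A_i)$.
   Context: A Banach lattice algebra is a real Banach lattice $A$ with an associative bilinear product making it a Banach algebra such that $xy\ge0$ whenever $x,y\ge0$; identity $e$ means a multiplicative identity with $\|e\|=1$. $L_a(x)=ax$, $R_a(x)=xa$. A band projection on a Banach lattice $X$ is an operator $P$ with $P^2=P$, $0\le P\le I_X$. $BP(A)=\{a\in A_+: L_aR_a\text{ is a band projection}\}$, $BP_l(A)=\{a\in A_+: L_a\text{ is a band projection}\}$, $BP_r(A)=\{a\in A_+: R_a\text{ is a band projection}\}$, $OI(A)=\{p: p^2=p,\ 0\le p\le e\}$. The $\ell_p$-sum $\ell_p(A_i)$ consists of families $(x_i)$ with $(\|x_i\|)\in\ell_p(I)$, normed by $\|(\|x_i\|)\|_p$; it is a Banach lattice algebra. *)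

theory Defs
  imports "HOL-Analysis.Analysis"
begin

text \<open>A (real) Banach lattice algebra, given concretely on a carrier set inside an
ambient type, so that a family of possibly different algebras can be indexed by i.\<close>

record 'a bla =
  bcar  :: "'a set"
  bzero :: 'a
  badd  :: "'a \<Rightarrow> 'a \<Rightarrow> 'a"
  bneg  :: "'a \<Rightarrow> 'a"
  bsmul :: "real \<Rightarrow> 'a \<Rightarrow> 'a"
  ble   :: "'a \<Rightarrow> 'a \<Rightarrow> bool"
  bmul  :: "'a \<Rightarrow> 'a \<Rightarrow> 'a"
  bnorm :: "'a \<Rightarrow> real"

definition is_sup :: "'a bla \<Rightarrow> 'a \<Rightarrow> 'a \<Rightarrow> 'a \<Rightarrow> bool" where
  "is_sup A x y s \<longleftrightarrow> s \<in> bcar A \<and> ble A x s \<and> ble A y s \<and>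
     (\<forall>z\<in>bcar A. ble A x z \<and> ble A y z \<longrightarrow> ble A s z)"

definition babs :: "'a bla \<Rightarrow> 'a \<Rightarrow> 'a" where
  "babs A x = (THE s. is_sup A x (bneg A x) s)"

definition banach_lattice_algebra :: "'a bla \<Rightarrow> bool" where
  "banach_lattice_algebra A \<longleftrightarrow>
    \<comment> \<open>closure\<close>
    bzero A \<in> bcar A \<and>
    (\<forall>x\<in>bcar A. \<forall>y\<in>bcar A. badd A x y \<in> bcar A \<and> bmul A x y \<in> bcar A) \<and>
    (\<forall>x\<in>bcar A. bneg A x \<in> bcar A \<and> (\<forall>c. bsmul A c x \<in> bcar A)) \<and>
    \<comment> \<open>real vector space\<close>
    (\<forall>x\<in>bcar A. \<forall>y\<in>bcar A. \<forall>z\<in>bcar A. badd A (badd A x y) z = badd A x (badd A y z)) \<and>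
    (\<forall>x\<in>bcar A. \<forall>y\<in>bcar A. badd A x y = badd A y x) \<and>
    (\<forall>x\<in>bcar A. badd A (bzero A) x = x \<and> badd A (bneg A x) x = bzero A) \<and>
    (\<forall>x\<in>bcar A. \<forall>y\<in>bcar A. \<forall>c. bsmul A c (badd A x y) = badd A (bsmul A c x) (bsmul A c y)) \<and>
    (\<forall>x\<in>bcar A. \<forall>a b. bsmul A (a + b) x = badd A (bsmul A a x) (bsmul A b x)) \<and>
    (\<forall>x\<in>bcar A. \<forall>a b. bsmul A (a * b) x = bsmul A a (bsmul A b x)) \<and>
    (\<forall>x\<in>bcar A. bsmul A 1 x = x) \<and>
    \<comment> \<open>ordered vector space\<close>
    (\<forall>x\<in>bcar A. ble A x x) \<and>
    (\<forall>x\<in>bcar A. \<forall>y\<in>bcar A. ble A x y \<and> ble A y x \<longrightarrow> x = y) \<and>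
    (\<forall>x\<in>bcar A. \<forall>y\<in>bcar A. \<forall>z\<in>bcar A. ble A x y \<and> ble A y z \<longrightarrow> ble A x z) \<and>
    (\<forall>x\<in>bcar A. \<forall>y\<in>bcar A. \<forall>z\<in>bcar A. ble A x y \<longrightarrow> ble A (badd A x z) (badd A y z)) \<and>
    (\<forall>x\<in>bcar A. \<forall>y\<in>bcar A. \<forall>c::real. ble A x y \<and> 0 \<le> c \<longrightarrow> ble A (bsmul A c x) (bsmul A c y)) \<and>
    \<comment> \<open>vector lattice\<close>
    (\<forall>x\<in>bcar A. \<forall>y\<in>bcar A. \<exists>s. is_sup A x y s) \<and>
    \<comment> \<open>norm\<close>
    (\<forall>x\<in>bcar A. 0 \<le> bnorm A x \<and> (bnorm A x = 0 \<longleftrightarrow> x = bzero A)) \<and>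
    (\<forall>x\<in>bcar A. \<forall>y\<in>bcar A. bnorm A (badd A x y) \<le> bnorm A x + bnorm A y) \<and>
    (\<forall>x\<in>bcar A. \<forall>c. bnorm A (bsmul A c x) = \<bar>c\<bar> * bnorm A x) \<and>
    \<comment> \<open>lattice norm\<close>
    (\<forall>x\<in>bcar A. \<forall>y\<in>bcar A. ble A (babs A x) (babs A y) \<longrightarrow> bnorm A x \<le> bnorm A y) \<and>
    \<comment> \<open>completeness\<close>
    (\<forall>X. (\<forall>n. X n \<in> bcar A) \<and>
         (\<forall>e>0. \<exists>N. \<forall>m\<ge>N. \<forall>n\<ge>N. bnorm A (badd A (X m) (bneg A (X n))) < e) \<longrightarrow>
         (\<exists>L\<in>bcar A. (\<lambda>n. bnorm A (badd A (X n) (bneg A L))) \<longlonglongrightarrow> 0)) \<and>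
    \<comment> \<open>Banach algebra\<close>
    (\<forall>x\<in>bcar A. \<forall>y\<in>bcar A. \<forall>z\<in>bcar A. bmul A (bmul A x y) z = bmul A x (bmul A y z)) \<and>
    (\<forall>x\<in>bcar A. \<forall>y\<in>bcar A. \<forall>z\<in>bcar A.
        bmul A x (badd A y z) = badd A (bmul A x y) (bmul A x z) \<and>
        bmul A (badd A x y) z = badd A (bmul A x z) (bmul A y z)) \<and>
    (\<forall>x\<in>bcar A. \<forall>y\<in>bcar A. \<forall>c. bmul A (bsmul A c x) y = bsmul A c (bmul A x y) \<and>
        bmul A x (bsmul A c y) = bsmul A c (bmul A x y)) \<and>
    (\<forall>x\<in>bcar A. \<forall>y\<in>bcar A. bnorm A (bmul A x y) \<le> bnorm A x * bnorm A y) \<and>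
    \<comment> \<open>positivity of the product\<close>
    (\<forall>x\<in>bcar A. \<forall>y\<in>bcar A. ble A (bzero A) x \<and> ble A (bzero A) y \<longrightarrow> ble A (bzero A) (bmul A x y))"

definition is_identity :: "'a bla \<Rightarrow> 'a \<Rightarrow> bool" where
  "is_identity A e \<longleftrightarrow> e \<in> bcar A \<and> (\<forall>x\<in>bcar A. bmul A e x = x \<and> bmul A x e = x)"

definition has_identity :: "'a bla \<Rightarrow> bool" where
  "has_identity A \<longleftrightarrow> (\<exists>e. is_identity A e \<and> bnorm A e = 1)"

definition bla_one :: "'a bla \<Rightarrow> 'a" where
  "bla_one A = (THE e. is_identity A e)"

definition band_projection :: "'a bla \<Rightarrow> ('a \<Rightarrow> 'a) \<Rightarrow> bool" where
  "band_projection A P \<longleftrightarrow>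
     (\<forall>x\<in>bcar A. P x \<in> bcar A) \<and>
     (\<forall>x\<in>bcar A. \<forall>y\<in>bcar A. P (badd A x y) = badd A (P x) (P y)) \<and>
     (\<forall>x\<in>bcar A. \<forall>c. P (bsmul A c x) = bsmul A c (P x)) \<and>
     (\<forall>x\<in>bcar A. P (P x) = P x) \<and>
     (\<forall>x\<in>bcar A. ble A (bzero A) x \<longrightarrow> ble A (bzero A) (P x) \<and> ble A (P x) x)"

definition Lmul :: "'a bla \<Rightarrow> 'a \<Rightarrow> 'a \<Rightarrow> 'a" where
  "Lmul A a = (\<lambda>x. bmul A a x)"

definition Rmul :: "'a bla \<Rightarrow> 'a \<Rightarrow> 'a \<Rightarrow> 'a" where
  "Rmul A a = (\<lambda>x. bmul A x a)"

definition positives :: "'a bla \<Rightarrow> 'a set" where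
  "positives A = {a \<in> bcar A. ble A (bzero A) a}"

definition BP :: "'a bla \<Rightarrow> 'a set" where
  "BP A = {a \<in> positives A. band_projection A (Lmul A a \<circ> Rmul A a)}"

definition BPl :: "'a bla \<Rightarrow> 'a set" where
  "BPl A = {a \<in> positives A. band_projection A (Lmul A a)}"

definition BPr :: "'a bla \<Rightarrow> 'a set" where
  "BPr A = {a \<in> positives A. band_projection A (Rmul A a)}"

definition OI :: "'a bla \<Rightarrow> 'a set" where
  "OI A = {q \<in> bcar A. bmul A q q = q \<and> ble A (bzero A) q \<and> ble A q (bla_one A)}"

text \<open>Elements are families indexed by I
(extensional: value undefined outside I); order and product are coordinatewise.\<close>

definition lp_carrier :: "ennreal \<Rightarrow> 'i set \<Rightarrow> ('i \<Rightarrow> 'a bla) \<Rightarrow> ('i \<Rightarrow> 'a) set" where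
  "lp_carrier p I A = {x. (\<forall>i\<in>I. x i \<in> bcar (A i)) \<and> (\<forall>i. i \<notin> I \<longrightarrow> x i = undefined) \<and>
      (if p = \<infinity> then bdd_above ((\<lambda>i. bnorm (A i) (x i)) ` I)
       else (\<lambda>i. bnorm (A i) (x i) powr enn2real p) summable_on I)}"

definition lp_norm :: "ennreal \<Rightarrow> 'i set \<Rightarrow> ('i \<Rightarrow> 'a bla) \<Rightarrow> ('i \<Rightarrow> 'a) \<Rightarrow> real" where
  "lp_norm p I A x =
     (if p = \<infinity> then (if I = {} then 0 else (SUP i\<in>I. bnorm (A i) (x i)))
      else (\<Sum>\<^sub>\<infinity>i\<in>I. bnorm (A i) (x i) powr enn2real p) powr (1 / enn2real p))"

definition lp_sum :: "ennreal \<Rightarrow> 'i set \<Rightarrow> ('i \<Rightarrow> 'a bla) \<Rightarrow> ('i \<Rightarrow> 'a) bla" where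
  "lp_sum p I A =
    \<lparr> bcar = lp_carrier p I A,
      bzero = (\<lambda>i. if i \<in> I then bzero (A i) else undefined),
      badd = (\<lambda>x y i. if i \<in> I then badd (A i) (x i) (y i) else undefined),
      bneg = (\<lambda>x i. if i \<in> I then bneg (A i) (x i) else undefined),
      bsmul = (\<lambda>c x i. if i \<in> I then bsmul (A i) c (x i) else undefined),
      ble = (\<lambda>x y. \<forall>i\<in>I. ble (A i) (x i) (y i)),
      bmul = (\<lambda>x y i. if i \<in> I then bmul (A i) (x i) (y i) else undefined),
      bnorm = lp_norm p I A \<rparr>"

end

theory Submission
  imports Defs
begin

lemma bla_facts:
  assumes "banach_lattice_algebra A"
  shows "bzero A \<in> bcar A"
    and "\<And>x y. x \<in> bcar A \<Longrightarrow> y \<in> bcar A \<Longrightarrow> bmul A x y \<in> bcar A"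
    and "\<And>x. x \<in> bcar A \<Longrightarrow> 0 \<le> bnorm A x"
    and "bnorm A (bzero A) = 0"
    and "\<And>x y. x \<in> bcar A \<Longrightarrow> y \<in> bcar A \<Longrightarrow> bnorm A (bmul A x y) \<le> bnorm A x * bnorm A y"
    and "\<And>x. x \<in> bcar A \<Longrightarrow> ble A x x"
proof -
  show "bzero A \<in> bcar A" using assms[unfolded banach_lattice_algebra_def, THEN conjunct1] .
  show "\<And>x y. x \<in> bcar A \<Longrightarrow> y \<in> bcar A \<Longrightarrow> bmul A x y \<in> bcar A" using assms[unfolded banach_lattice_algebra_def, THEN conjunct2, THEN conjunct1] by blast
  show "\<And>x. x \<in> bcar A \<Longrightarrow> 0 \<le> bnorm A x" using assms[unfolded banach_lattice_algebra_def, THEN conjunct2, THEN conjunct2, THEN conjunct2, THEN conjunct2, THEN conjunct2, THEN conjunct2, THEN conjunct2, THEN conjunct2, THEN conjunct2, THEN conjunct2, THEN conjunct2, THEN conjunct2, THEN conjunct2, THEN conjunct2, THEN conjunct2, THEN conjunct2, THEN conjunct1] by blast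
  show "bnorm A (bzero A) = 0" using assms[unfolded banach_lattice_algebra_def, THEN conjunct2, THEN conjunct2, THEN conjunct2, THEN conjunct2, THEN conjunct2, THEN conjunct2, THEN conjunct2, THEN conjunct2, THEN conjunct2, THEN conjunct2, THEN conjunct2, THEN conjunct2, THEN conjunct2, THEN conjunct2, THEN conjunct2, THEN conjunct2, THEN conjunct1] assms[unfolded banach_lattice_algebra_def, THEN conjunct1] by blast
  show "\<And>x y. x \<in> bcar A \<Longrightarrow> y \<in> bcar A \<Longrightarrow> bnorm A (bmul A x y) \<le> bnorm A x * bnorm A y" using assms[unfolded banach_lattice_algebra_def, THEN conjunct2, THEN conjunct2, THEN conjunct2, THEN conjunct2, THEN conjunct2, THEN conjunct2, THEN conjunct2, THEN conjunct2, THEN conjunct2, THEN conjunct2, THEN conjunct2, THEN conjunct2, THEN conjunct2, THEN conjunct2, THEN conjunct2, THEN conjunct2, THEN conjunct2, THEN conjunct2, THEN conjunct2, THEN conjunct2, THEN conjunct2, THEN conjunct2, THEN conjunct2, THEN conjunct2, THEN conjunct1] by blast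
  show "\<And>x. x \<in> bcar A \<Longrightarrow> ble A x x" using assms[unfolded banach_lattice_algebra_def, THEN conjunct2, THEN conjunct2, THEN conjunct2, THEN conjunct2, THEN conjunct2, THEN conjunct2, THEN conjunct2, THEN conjunct2, THEN conjunct2, THEN conjunct2, THEN conjunct1] by blast
qed

lemma lp_coord: "x \<in> lp_carrier p I A \<Longrightarrow> i \<in> I \<Longrightarrow> x i \<in> bcar (A i)"
  unfolding lp_carrier_def by simp

lemma lp_nn: "x \<in> lp_carrier p I A \<Longrightarrow> \<forall>i\<in>I. banach_lattice_algebra (A i) \<Longrightarrow> i \<in> I \<Longrightarrow> 0 \<le> bnorm (A i) (x i)"
  using lp_coord bla_facts(3) by metis

lemma lp_bound:
  assumes "x \<in> lp_carrier p I A" "1 \<le> p" "\<forall>i\<in>I. banach_lattice_algebra (A i)"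
  shows "\<exists>C\<ge>0. \<forall>i\<in>I. bnorm (A i) (x i) \<le> C"
proof (cases "p = \<infinity>")
  case True
  have "bdd_above ((\<lambda>i. bnorm (A i) (x i)) ` I)"
    using assms(1) True unfolding lp_carrier_def by simp
  then obtain M where M0: "\<forall>y\<in>(\<lambda>i. bnorm (A i) (x i)) ` I. y \<le> M"
    unfolding bdd_above_def by blast
  then have M: "\<forall>i\<in>I. bnorm (A i) (x i) \<le> M" by blast
  have "\<forall>i\<in>I. bnorm (A i) (x i) \<le> max 0 M" using M by (meson max.coboundedI2)
  moreover have "0 \<le> max 0 (M::real)" by simp
  ultimately show ?thesis by blast
next
  case False
  define q where "q = enn2real p"
  have q1: "1 \<le> q" unfolding q_def using assms(2) False enn2real_mono[of 1 p]
    by (simp add: top.not_eq_extremum)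
  define f where "f i = bnorm (A i) (x i) powr q" for i
  have sf: "f summable_on I" using assms(1) False unfolding lp_carrier_def f_def q_def by simp
  have nn: "\<And>i. i \<in> I \<Longrightarrow> 0 \<le> bnorm (A i) (x i)"
    using assms(1,3) lp_nn by metis
  have fle: "f i \<le> infsum f I" if i: "i \<in> I" for i
  proof -
    have "infsum f {i} \<le> infsum f I"
    proof (rule infsum_mono_neutral)
      show "f summable_on {i}" by simp
      show "f summable_on I" by (rule sf)
      show "\<And>y. y \<in> {i} \<inter> I \<Longrightarrow> f y \<le> f y" by simp
      show "\<And>y. y \<in> {i} - I \<Longrightarrow> f y \<le> 0" using i by simp
      show "\<And>y. y \<in> I - {i} \<Longrightarrow> 0 \<le> f y" unfolding f_def by simp
    qed
    then show ?thesis by simp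
  qed
  have "\<forall>i\<in>I. bnorm (A i) (x i) \<le> max 1 (infsum f I)"
  proof
    fix i assume i: "i \<in> I"
    show "bnorm (A i) (x i) \<le> max 1 (infsum f I)"
    proof (cases "bnorm (A i) (x i) \<le> 1")
      case True then show ?thesis by simp
    next
      case False
      have "bnorm (A i) (x i) = bnorm (A i) (x i) powr 1" using nn[OF i] by simp
      also have "\<dots> \<le> f i" unfolding f_def using False q1 by (intro powr_mono) auto
      finally show ?thesis using fle[OF i] by linarith
    qed
  qed
  moreover have "0 \<le> max 1 (infsum f I)" by simp
  ultimately show ?thesis by blast
qed

lemma lp_map:
  assumes "x \<in> lp_carrier p I A" "1 \<le> p" "\<forall>i\<in>I. banach_lattice_algebra (A i)"
    and "\<forall>i\<in>I. y i \<in> bcar (A i)" "\<forall>i. i \<notin> I \<longrightarrow> y i = undefined"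
    and "\<forall>i\<in>I. bnorm (A i) (y i) \<le> C * bnorm (A i) (x i)" "0 \<le> C"
  shows "y \<in> lp_carrier p I A"
proof -
  have nnx: "\<And>i. i \<in> I \<Longrightarrow> 0 \<le> bnorm (A i) (x i)"
    using assms(1,3) lp_nn by metis
  have nny: "\<And>i. i \<in> I \<Longrightarrow> 0 \<le> bnorm (A i) (y i)"
    using assms(4,3) by (simp add: bla_facts(3))
  show ?thesis
  proof (cases "p = \<infinity>")
    case True
    have "bdd_above ((\<lambda>i. bnorm (A i) (x i)) ` I)"
      using assms(1) True unfolding lp_carrier_def by simp
    then obtain M0 where M0: "\<forall>y\<in>(\<lambda>i. bnorm (A i) (x i)) ` I. y \<le> M0"
      unfolding bdd_above_def by blast
    obtain M where M: "\<forall>i\<in>I. bnorm (A i) (x i) \<le> M" using M0 by blast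
    have "\<forall>i\<in>I. bnorm (A i) (y i) \<le> C * M"
    proof
      fix i assume i: "i \<in> I"
      have "C * bnorm (A i) (x i) \<le> C * M" using M i assms(7) by (simp add: mult_left_mono)
      then show "bnorm (A i) (y i) \<le> C * M" using assms(6) i by (meson order_trans)
    qed
    then have "bdd_above ((\<lambda>i. bnorm (A i) (y i)) ` I)" unfolding bdd_above_def by blast
    then show ?thesis using True assms(4,5) unfolding lp_carrier_def by simp
  next
    case False
    define q where "q = enn2real p"
    have q1: "1 \<le> q" unfolding q_def using assms(2) False enn2real_mono[of 1 p]
      by (simp add: top.not_eq_extremum)
    have sf: "(\<lambda>i. bnorm (A i) (x i) powr q) summable_on I"
      using assms(1) False unfolding lp_carrier_def q_def by simp
    have "(\<lambda>i. C powr q * bnorm (A i) (x i) powr q) summable_on I"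
      by (rule summable_on_cmult_right[OF sf])
    then have "(\<lambda>i. bnorm (A i) (y i) powr q) summable_on I"
    proof (rule summable_on_comparison_test)
      fix i assume i: "i \<in> I"
      have "bnorm (A i) (y i) powr q \<le> (C * bnorm (A i) (x i)) powr q"
        using assms(6) i nny[OF i] q1 by (intro powr_mono2) auto
      also have "\<dots> = C powr q * bnorm (A i) (x i) powr q"
        using assms(7) nnx[OF i] by (simp add: powr_mult)
      finally show "bnorm (A i) (y i) powr q \<le> C powr q * bnorm (A i) (x i) powr q" .
    qed simp
    then show ?thesis using False assms(4,5) unfolding lp_carrier_def q_def by simp
  qed
qed

definition emb :: "'i set \<Rightarrow> ('i \<Rightarrow> 'a bla) \<Rightarrow> 'i \<Rightarrow> 'a \<Rightarrow> 'i \<Rightarrow> 'a" where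
  "emb I A i y = (\<lambda>j. if j = i then y else if j \<in> I then bzero (A j) else undefined)"

lemma emb_carrier:
  assumes "\<forall>i\<in>I. banach_lattice_algebra (A i)" "i \<in> I" "y \<in> bcar (A i)"
  shows "emb I A i y \<in> lp_carrier p I A"
proof -
  have z: "\<And>j. j \<in> I \<Longrightarrow> j \<noteq> i \<Longrightarrow> bnorm (A j) (emb I A i y j) = 0"
    unfolding emb_def using assms(1) by (simp add: bla_facts(4))
  have fin: "(\<lambda>j. bnorm (A j) (emb I A i y j)) ` I \<subseteq> {bnorm (A i) y, 0}"
  proof
    fix t assume "t \<in> (\<lambda>j. bnorm (A j) (emb I A i y j)) ` I"
    then obtain j where j: "j \<in> I" "t = bnorm (A j) (emb I A i y j)" by blast
    show "t \<in> {bnorm (A i) y, 0}"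
    proof (cases "j = i")
      case True then show ?thesis using j by (simp add: emb_def)
    next
      case False then show ?thesis using j z by simp
    qed
  qed
  have "(\<lambda>j. bnorm (A j) (emb I A i y j) powr enn2real p) summable_on I \<longleftrightarrow>
        (\<lambda>j. bnorm (A j) (emb I A i y j) powr enn2real p) summable_on {i}"
  proof (rule summable_on_cong_neutral)
    fix j assume "j \<in> I - {i}"
    then show "bnorm (A j) (emb I A i y j) powr enn2real p = 0" using z by simp
  qed (use assms(2) in auto)
  then have "(\<lambda>j. bnorm (A j) (emb I A i y j) powr enn2real p) summable_on I" by simp
  moreover have "bdd_above ((\<lambda>j. bnorm (A j) (emb I A i y j)) ` I)"
    by (rule bdd_above_mono[OF _ fin]) simp
  moreover have "\<forall>j\<in>I. emb I A i y j \<in> bcar (A j)"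
    using assms unfolding emb_def by (simp add: bla_facts(1))
  moreover have "\<forall>j. j \<notin> I \<longrightarrow> emb I A i y j = undefined"
    using assms(2) unfolding emb_def by auto
  ultimately show ?thesis unfolding lp_carrier_def by simp
qed

lemma emb_at: "emb I A i y i = y" by (simp add: emb_def)


lemma lp_sum_simps[simp]:
  "bcar (lp_sum p I A) = lp_carrier p I A"
  "bzero (lp_sum p I A) = (\<lambda>i. if i \<in> I then bzero (A i) else undefined)"
  "badd (lp_sum p I A) x y = (\<lambda>i. if i \<in> I then badd (A i) (x i) (y i) else undefined)"
  "bsmul (lp_sum p I A) c x = (\<lambda>i. if i \<in> I then bsmul (A i) c (x i) else undefined)"
  "ble (lp_sum p I A) x y = (\<forall>i\<in>I. ble (A i) (x i) (y i))"
  "bmul (lp_sum p I A) x y = (\<lambda>i. if i \<in> I then bmul (A i) (x i) (y i) else undefined)"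
  unfolding lp_sum_def by (simp_all only: bla.select_convs)

lemma lp_sum_app[simp]:
  "badd (lp_sum p I A) x y i = (if i \<in> I then badd (A i) (x i) (y i) else undefined)"
  "bsmul (lp_sum p I A) c x i = (if i \<in> I then bsmul (A i) c (x i) else undefined)"
  "bmul (lp_sum p I A) x y i = (if i \<in> I then bmul (A i) (x i) (y i) else undefined)"
  unfolding lp_sum_def by (simp_all only: bla.select_convs)

lemma bp_lift:
  assumes bla: "\<forall>i\<in>I. banach_lattice_algebra (A i)"
    and Fc: "\<forall>i\<in>I. \<forall>y\<in>bcar (A i). F i y \<in> bcar (A i)"
    and hmap: "\<forall>x\<in>lp_carrier p I A. (\<lambda>i. if i \<in> I then F i (x i) else undefined) \<in> lp_carrier p I A"
  shows "band_projection (lp_sum p I A) (\<lambda>x i. if i \<in> I then F i (x i) else undefined)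
     \<longleftrightarrow> (\<forall>i\<in>I. band_projection (A i) (F i))"
proof
  assume H: "band_projection (lp_sum p I A) (\<lambda>x i. if i \<in> I then F i (x i) else undefined)"
  show "\<forall>i\<in>I. band_projection (A i) (F i)"
  proof
    fix i assume i: "i \<in> I"
    let ?e = "emb I A i"
    have ec: "\<And>y. y \<in> bcar (A i) \<Longrightarrow> ?e y \<in> lp_carrier p I A" using emb_carrier[OF bla i] by blast
    have H1: "\<forall>x\<in>lp_carrier p I A. \<forall>y\<in>lp_carrier p I A.
       (\<lambda>j. if j \<in> I then F j (badd (A j) (x j) (y j)) else undefined)
     = (\<lambda>j. if j \<in> I then badd (A j) (F j (x j)) (F j (y j)) else undefined)"
      using H unfolding band_projection_def by (simp cong: if_cong)
    have H2: "\<forall>x\<in>lp_carrier p I A. \<forall>c.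
       (\<lambda>j. if j \<in> I then F j (bsmul (A j) c (x j)) else undefined)
     = (\<lambda>j. if j \<in> I then bsmul (A j) c (F j (x j)) else undefined)"
      using H unfolding band_projection_def by (simp cong: if_cong)
    have H3: "\<forall>x\<in>lp_carrier p I A.
       (\<lambda>j. if j \<in> I then F j (F j (x j)) else undefined)
     = (\<lambda>j. if j \<in> I then F j (x j) else undefined)"
      using H unfolding band_projection_def by (simp cong: if_cong)
    have H4: "\<forall>x\<in>lp_carrier p I A. (\<forall>j\<in>I. ble (A j) (bzero (A j)) (x j)) \<longrightarrow>
       (\<forall>j\<in>I. ble (A j) (bzero (A j)) (F j (x j))) \<and> (\<forall>j\<in>I. ble (A j) (F j (x j)) (x j))"
      using H unfolding band_projection_def by (simp cong: if_cong)
    show "band_projection (A i) (F i)"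
      unfolding band_projection_def
    proof (intro conjI ballI allI impI)
      fix x assume "x \<in> bcar (A i)"
      then show "F i x \<in> bcar (A i)" using Fc i by blast
    next
      fix x y assume xy: "x \<in> bcar (A i)" "y \<in> bcar (A i)"
      have "F i (badd (A i) x y) = badd (A i) (F i x) (F i y)"
        using fun_cong[OF H1[rule_format, OF ec[OF xy(1)] ec[OF xy(2)]], of i] i by (simp add: emb_at)
      then show "F i (badd (A i) x y) = badd (A i) (F i x) (F i y)" .
    next
      fix x c assume x: "x \<in> bcar (A i)"
      show "F i (bsmul (A i) c x) = bsmul (A i) c (F i x)"
        using fun_cong[OF H2[rule_format, OF ec[OF x], of c], of i] i by (simp add: emb_at)
    next
      fix x assume x: "x \<in> bcar (A i)"
      show "F i (F i x) = F i x"
        using fun_cong[OF H3[rule_format, OF ec[OF x]], of i] i by (simp add: emb_at)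
    next
      fix x assume x: "x \<in> bcar (A i)" and pos: "ble (A i) (bzero (A i)) x"
      have "\<forall>j\<in>I. ble (A j) (bzero (A j)) (?e x j)"
      proof
        fix j assume j: "j \<in> I"
        show "ble (A j) (bzero (A j)) (?e x j)"
        proof (cases "j = i")
          case True then show ?thesis using pos by (simp add: emb_def)
        next
          case False then show ?thesis using j bla by (simp add: emb_def bla_facts(1,6))
        qed
      qed
      then have "(\<forall>j\<in>I. ble (A j) (bzero (A j)) (F j (?e x j))) \<and> (\<forall>j\<in>I. ble (A j) (F j (?e x j)) (?e x j))"
        using H4 ec[OF x] by blast
      then have "ble (A i) (bzero (A i)) (F i (?e x i)) \<and> ble (A i) (F i (?e x i)) (?e x i)" using i by blast
      then show "ble (A i) (bzero (A i)) (F i x)" and "ble (A i) (F i x) x" by (simp_all only: emb_at)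
    qed
  qed
next
  assume H: "\<forall>i\<in>I. band_projection (A i) (F i)"
  have cx: "\<And>x j. x \<in> lp_carrier p I A \<Longrightarrow> j \<in> I \<Longrightarrow> x j \<in> bcar (A j)"
    by (rule lp_coord)
  show "band_projection (lp_sum p I A) (\<lambda>x i. if i \<in> I then F i (x i) else undefined)"
    unfolding band_projection_def
    apply (intro conjI ballI allI impI)
    using hmap apply simp
    apply (rule ext)
    using H cx unfolding band_projection_def apply (simp cong: if_cong)
    apply (rule ext)
    using H cx unfolding band_projection_def apply (simp cong: if_cong)
    apply (rule ext)
    using H cx unfolding band_projection_def apply (simp cong: if_cong)
    using H cx unfolding band_projection_def apply (simp cong: if_cong)
    using H cx unfolding band_projection_def apply (simp cong: if_cong)
    done
qed


lemma hmap_gen: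
  assumes bla: "\<forall>i\<in>I. banach_lattice_algebra (A i)" and p1: "1 \<le> p"
    and Fc: "\<forall>i\<in>I. \<forall>y\<in>bcar (A i). F i y \<in> bcar (A i)"
    and C: "0 \<le> C" "\<forall>i\<in>I. \<forall>y\<in>bcar (A i). bnorm (A i) (F i y) \<le> C * bnorm (A i) y"
  shows "\<forall>x\<in>lp_carrier p I A. (\<lambda>i. if i \<in> I then F i (x i) else undefined) \<in> lp_carrier p I A"
proof
  fix x assume x: "x \<in> lp_carrier p I A"
  show "(\<lambda>i. if i \<in> I then F i (x i) else undefined) \<in> lp_carrier p I A"
  proof (rule lp_map[OF x p1 bla _ _ _ C(1)])
    show "\<forall>i\<in>I. (if i \<in> I then F i (x i) else undefined) \<in> bcar (A i)"
      using Fc lp_coord[OF x] by simp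
    show "\<forall>i. i \<notin> I \<longrightarrow> (if i \<in> I then F i (x i) else undefined) = undefined" by simp
    show "\<forall>i\<in>I. bnorm (A i) (if i \<in> I then F i (x i) else undefined) \<le> C * bnorm (A i) (x i)"
      using C(2) lp_coord[OF x] by simp
  qed
qed

lemma positives_lp:
  assumes "x \<in> lp_carrier p I A"
  shows "x \<in> positives (lp_sum p I A) \<longleftrightarrow> (\<forall>i\<in>I. x i \<in> positives (A i))"
  using assms lp_coord[OF assms] unfolding positives_def by (simp cong: if_cong)

lemma norm_bound_a:
  assumes bla: "\<forall>i\<in>I. banach_lattice_algebra (A i)" and p1: "1 \<le> p"
    and a: "a \<in> lp_carrier p I A"
  obtains C where "0 \<le> C" "\<forall>i\<in>I. bnorm (A i) (a i) \<le> C"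
  using lp_bound[OF a p1 bla] by blast

lemma identity_unique:
  assumes "is_identity A e" "is_identity A e'" shows "e = e'"
proof -
  have e: "e \<in> bcar A" "\<forall>x\<in>bcar A. bmul A e x = x \<and> bmul A x e = x"
    using assms(1) unfolding is_identity_def by simp_all
  have e': "e' \<in> bcar A" "\<forall>x\<in>bcar A. bmul A e' x = x \<and> bmul A x e' = x"
    using assms(2) unfolding is_identity_def by simp_all
  have "bmul A e e' = e'" using e(2) e'(1) by simp
  moreover have "bmul A e e' = e" using e'(2) e(1) by simp
  ultimately show ?thesis by simp
qed

lemma bla_one_eq:
  assumes "is_identity A e" shows "bla_one A = e"
  unfolding bla_one_def
proof (rule the_equality)
  show "is_identity A e" by (rule assms)
  show "\<And>y. is_identity A y \<Longrightarrow> y = e" using identity_unique[OF _ assms] .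
qed

lemma OI_lp:
  assumes bla: "\<forall>i\<in>I. banach_lattice_algebra (A i)"
    and hid: "\<forall>i\<in>I. has_identity (A i)"
  shows "OI (lp_sum \<infinity> I A) = {x \<in> bcar (lp_sum \<infinity> I A). \<forall>i\<in>I. x i \<in> OI (A i)}"
proof -
  have idi: "\<And>i. i \<in> I \<Longrightarrow> is_identity (A i) (bla_one (A i)) \<and> bnorm (A i) (bla_one (A i)) = 1"
  proof -
    fix i assume i: "i \<in> I"
    obtain e where e: "is_identity (A i) e" "bnorm (A i) e = 1"
      using hid i unfolding has_identity_def by blast
    then show "is_identity (A i) (bla_one (A i)) \<and> bnorm (A i) (bla_one (A i)) = 1"
      using bla_one_eq[OF e(1)] by simp
  qed
  define E where "E = (\<lambda>i. if i \<in> I then bla_one (A i) else undefined)"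
  have Ec: "E \<in> lp_carrier \<infinity> I A"
  proof -
    have "(\<lambda>i. bnorm (A i) (E i)) ` I \<subseteq> {1}"
    proof
      fix t assume "t \<in> (\<lambda>i. bnorm (A i) (E i)) ` I"
      then obtain i where i: "i \<in> I" and t: "t = bnorm (A i) (E i)" by (rule imageE)
      show "t \<in> {1}" using idi[OF i] i t unfolding E_def by simp
    qed
    then have "bdd_above ((\<lambda>i. bnorm (A i) (E i)) ` I)" by (rule bdd_above_mono[rotated]) simp
    moreover have "\<forall>i\<in>I. E i \<in> bcar (A i)" using idi unfolding E_def is_identity_def by simp
    moreover have "\<forall>i. i \<notin> I \<longrightarrow> E i = undefined" unfolding E_def by simp
    ultimately show ?thesis unfolding lp_carrier_def by simp
  qed
  have ext_x: "\<And>x i. x \<in> lp_carrier \<infinity> I A \<Longrightarrow> i \<notin> I \<Longrightarrow> x i = undefined"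
    unfolding lp_carrier_def by simp
  have "is_identity (lp_sum \<infinity> I A) E"
    unfolding is_identity_def
  proof (intro conjI ballI)
    show "E \<in> bcar (lp_sum \<infinity> I A)" using Ec by simp
  next
    fix x assume "x \<in> bcar (lp_sum \<infinity> I A)"
    then have x: "x \<in> lp_carrier \<infinity> I A" by simp
    show "bmul (lp_sum \<infinity> I A) E x = x"
    proof
      fix i show "bmul (lp_sum \<infinity> I A) E x i = x i"
        using idi lp_coord[OF x] ext_x[OF x] unfolding E_def is_identity_def by (cases "i \<in> I") simp_all
    qed
    show "bmul (lp_sum \<infinity> I A) x E = x"
    proof
      fix i show "bmul (lp_sum \<infinity> I A) x E i = x i"
        using idi lp_coord[OF x] ext_x[OF x] unfolding E_def is_identity_def by (cases "i \<in> I") simp_all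
    qed
  qed
  then have one: "bla_one (lp_sum \<infinity> I A) = E" by (rule bla_one_eq)
  show ?thesis
  proof (intro set_eqI iffI)
    fix x assume "x \<in> OI (lp_sum \<infinity> I A)"
    then have x: "x \<in> lp_carrier \<infinity> I A" and xx: "bmul (lp_sum \<infinity> I A) x x = x"
      and p0: "ble (lp_sum \<infinity> I A) (bzero (lp_sum \<infinity> I A)) x" and p1: "ble (lp_sum \<infinity> I A) x E"
      unfolding OI_def one by simp_all
    have "\<forall>i\<in>I. x i \<in> OI (A i)"
    proof
      fix i assume i: "i \<in> I"
      have "bmul (A i) (x i) (x i) = x i" using fun_cong[OF xx, of i] i by simp
      moreover have "ble (A i) (bzero (A i)) (x i)" using p0 i by simp
      moreover have "ble (A i) (x i) (bla_one (A i))" using p1 i unfolding E_def by simp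
      ultimately show "x i \<in> OI (A i)" unfolding OI_def using lp_coord[OF x i] by simp
    qed
    then show "x \<in> {x \<in> bcar (lp_sum \<infinity> I A). \<forall>i\<in>I. x i \<in> OI (A i)}" using x by simp
  next
    fix x assume "x \<in> {x \<in> bcar (lp_sum \<infinity> I A). \<forall>i\<in>I. x i \<in> OI (A i)}"
    then have x: "x \<in> lp_carrier \<infinity> I A" and H: "\<forall>i\<in>I. x i \<in> OI (A i)" by simp_all
    have "bmul (lp_sum \<infinity> I A) x x = x"
    proof
      fix i show "bmul (lp_sum \<infinity> I A) x x i = x i"
        using H ext_x[OF x] unfolding OI_def by (cases "i \<in> I") simp_all
    qed
    moreover have "ble (lp_sum \<infinity> I A) (bzero (lp_sum \<infinity> I A)) x" using H unfolding OI_def by simp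
    moreover have "ble (lp_sum \<infinity> I A) x E" using H unfolding OI_def E_def by simp
    ultimately show "x \<in> OI (lp_sum \<infinity> I A)" unfolding OI_def one using x by simp
  qed
qed

theorem mainTheorem19:
  fixes I :: "'i set" and A :: "'i \<Rightarrow> 'a bla" and p :: ennreal
  assumes "\<forall>i\<in>I. banach_lattice_algebra (A i)"
    and "1 \<le> p"
  shows "(\<forall>x\<in>bcar (lp_sum p I A).
            (x \<in> BP (lp_sum p I A) \<longleftrightarrow> (\<forall>i\<in>I. x i \<in> BP (A i))) \<and>
            (x \<in> BPl (lp_sum p I A) \<longleftrightarrow> (\<forall>i\<in>I. x i \<in> BPl (A i))) \<and>
            (x \<in> BPr (lp_sum p I A) \<longleftrightarrow> (\<forall>i\<in>I. x i \<in> BPr (A i)))) \<and>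
         ((\<forall>i\<in>I. has_identity (A i)) \<longrightarrow>
            OI (lp_sum \<infinity> I A) = {x \<in> bcar (lp_sum \<infinity> I A). \<forall>i\<in>I. x i \<in> OI (A i)})"
proof (intro conjI ballI impI)
  note bla = assms(1)
  fix a assume "a \<in> bcar (lp_sum p I A)"
  then have a: "a \<in> lp_carrier p I A" by simp
  have ac: "\<And>i. i \<in> I \<Longrightarrow> a i \<in> bcar (A i)" using lp_coord[OF a] .
  obtain C where C: "0 \<le> C" "\<forall>i\<in>I. bnorm (A i) (a i) \<le> C"
    using norm_bound_a[OF bla assms(2) a] by blast
  have mc: "\<And>i y z. i \<in> I \<Longrightarrow> y \<in> bcar (A i) \<Longrightarrow> z \<in> bcar (A i) \<Longrightarrow> bmul (A i) y z \<in> bcar (A i)"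
    using bla by (simp add: bla_facts(2))
  have mn: "\<And>i y z. i \<in> I \<Longrightarrow> y \<in> bcar (A i) \<Longrightarrow> z \<in> bcar (A i) \<Longrightarrow> bnorm (A i) (bmul (A i) y z) \<le> bnorm (A i) y * bnorm (A i) z"
    using bla by (simp add: bla_facts(5))
  have nn: "\<And>i y. i \<in> I \<Longrightarrow> y \<in> bcar (A i) \<Longrightarrow> 0 \<le> bnorm (A i) y"
    using bla by (simp add: bla_facts(3))
  define FL where "FL i y = bmul (A i) (a i) y" for i y
  have FLc: "\<forall>i\<in>I. \<forall>y\<in>bcar (A i). FL i y \<in> bcar (A i)" unfolding FL_def using mc ac by simp
  have FLn: "\<forall>i\<in>I. \<forall>y\<in>bcar (A i). bnorm (A i) (FL i y) \<le> C * bnorm (A i) y"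
  proof (intro ballI)
    fix i y assume i: "i \<in> I" and y: "y \<in> bcar (A i)"
    have "bnorm (A i) (FL i y) \<le> bnorm (A i) (a i) * bnorm (A i) y" unfolding FL_def using mn i y ac by simp
    also have "\<dots> \<le> C * bnorm (A i) y" using C(2) i nn[OF i y] by (simp add: mult_right_mono)
    finally show "bnorm (A i) (FL i y) \<le> C * bnorm (A i) y" .
  qed
  have eqL: "Lmul (lp_sum p I A) a = (\<lambda>x i. if i \<in> I then FL i (x i) else undefined)"
    unfolding Lmul_def FL_def by (rule ext) simp
  have bpL: "band_projection (lp_sum p I A) (Lmul (lp_sum p I A) a) \<longleftrightarrow> (\<forall>i\<in>I. band_projection (A i) (FL i))"
    unfolding eqL by (rule bp_lift[OF bla FLc hmap_gen[OF bla assms(2) FLc C(1) FLn]])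
  have FLe: "\<And>i. FL i = Lmul (A i) (a i)" unfolding FL_def Lmul_def by (rule ext) simp
  show "a \<in> BPl (lp_sum p I A) \<longleftrightarrow> (\<forall>i\<in>I. a i \<in> BPl (A i))"
    unfolding BPl_def using bpL positives_lp[OF a] FLe by auto
  define FR where "FR i y = bmul (A i) y (a i)" for i y
  have FRc: "\<forall>i\<in>I. \<forall>y\<in>bcar (A i). FR i y \<in> bcar (A i)" unfolding FR_def using mc ac by simp
  have FRn: "\<forall>i\<in>I. \<forall>y\<in>bcar (A i). bnorm (A i) (FR i y) \<le> C * bnorm (A i) y"
  proof (intro ballI)
    fix i y assume i: "i \<in> I" and y: "y \<in> bcar (A i)"
    have "bnorm (A i) (FR i y) \<le> bnorm (A i) y * bnorm (A i) (a i)" unfolding FR_def using mn i y ac by simp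
    also have "\<dots> \<le> bnorm (A i) y * C" using C(2) i nn[OF i y] by (simp add: mult_left_mono)
    finally show "bnorm (A i) (FR i y) \<le> C * bnorm (A i) y" by (simp add: mult.commute)
  qed
  have eqR: "Rmul (lp_sum p I A) a = (\<lambda>x i. if i \<in> I then FR i (x i) else undefined)"
    unfolding Rmul_def FR_def by (rule ext) simp
  have bpR: "band_projection (lp_sum p I A) (Rmul (lp_sum p I A) a) \<longleftrightarrow> (\<forall>i\<in>I. band_projection (A i) (FR i))"
    unfolding eqR by (rule bp_lift[OF bla FRc hmap_gen[OF bla assms(2) FRc C(1) FRn]])
  have FRe: "\<And>i. FR i = Rmul (A i) (a i)" unfolding FR_def Rmul_def by (rule ext) simp
  show "a \<in> BPr (lp_sum p I A) \<longleftrightarrow> (\<forall>i\<in>I. a i \<in> BPr (A i))"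
    unfolding BPr_def using bpR positives_lp[OF a] FRe by auto
  define FB where "FB i y = bmul (A i) (a i) (bmul (A i) y (a i))" for i y
  have FBc: "\<forall>i\<in>I. \<forall>y\<in>bcar (A i). FB i y \<in> bcar (A i)" unfolding FB_def using mc ac by simp
  have FBn: "\<forall>i\<in>I. \<forall>y\<in>bcar (A i). bnorm (A i) (FB i y) \<le> (C * C) * bnorm (A i) y"
  proof (intro ballI)
    fix i y assume i: "i \<in> I" and y: "y \<in> bcar (A i)"
    have ya: "bmul (A i) y (a i) \<in> bcar (A i)" using mc i y ac by simp
    have "bnorm (A i) (FB i y) \<le> bnorm (A i) (a i) * bnorm (A i) (bmul (A i) y (a i))"
      unfolding FB_def using mn i ya ac by simp
    also have "\<dots> \<le> C * bnorm (A i) (bmul (A i) y (a i))"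
      using C(2) i nn[OF i ya] by (simp add: mult_right_mono)
    also have "\<dots> \<le> C * (bnorm (A i) y * bnorm (A i) (a i))"
      using mn[OF i y ac[OF i]] C(1) by (simp add: mult_left_mono)
    also have "\<dots> \<le> C * (bnorm (A i) y * C)"
      using C i nn[OF i y] by (simp add: mult_left_mono)
    finally show "bnorm (A i) (FB i y) \<le> (C * C) * bnorm (A i) y" by (simp add: mult_ac)
  qed
  have eqB: "Lmul (lp_sum p I A) a \<circ> Rmul (lp_sum p I A) a = (\<lambda>x i. if i \<in> I then FB i (x i) else undefined)"
    unfolding Lmul_def Rmul_def FB_def comp_def by (rule ext) (simp cong: if_cong)
  have bpB: "band_projection (lp_sum p I A) (Lmul (lp_sum p I A) a \<circ> Rmul (lp_sum p I A) a) \<longleftrightarrow> (\<forall>i\<in>I. band_projection (A i) (FB i))"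
    unfolding eqB by (rule bp_lift[OF bla FBc hmap_gen[OF bla assms(2) FBc _ FBn]]) (use C(1) in simp)
  have FBe: "\<And>i. FB i = Lmul (A i) (a i) \<circ> Rmul (A i) (a i)" unfolding FB_def Lmul_def Rmul_def comp_def by (rule ext) simp
  show "a \<in> BP (lp_sum p I A) \<longleftrightarrow> (\<forall>i\<in>I. a i \<in> BP (A i))"
    unfolding BP_def using bpB positives_lp[OF a] FBe by auto
next
  show "OI (lp_sum \<infinity> I A) = {x \<in> bcar (lp_sum \<infinity> I A). \<forall>i\<in>I. x i \<in> OI (A i)}"
    if "\<forall>i\<in>I. has_identity (A i)" using OI_lp[OF assms(1) that] .
qed

end
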